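(* The language ${\rm ss}(\{0,1\}^* )=\bigcup_{x\in\{0,1\}^*}(x \,\text{ш}\, x)$ is not context-free. In particular, there is a regular language $L$ such that ${\rm ss}(L)$ is not context-free.
   Context: For words $x,y$, the (ordinary) shuffle $x \,\text{ш}\, y$ is the finite set of all words $z = x_1y_1x_2y_2\cdots x_ny_n$ for some $n\ge 1$ and words $x_1,\dots,x_n,y_1,\dots,y_n$ (possibly empty) with $x=x_1\cdots x_n$ and $y=y_1\cdots y_n$. For a language $L$, ${\rm ss}(L)=\bigcup_{x\in L}(x\,\text{ш}\,x)$. *)

theory Defs
  imports Main
begin

text \<open>Words over the binary alphabet {0,1} are modelled as bool lists.
  The ordinary shuffle is the library's shuffles.\<close>

definition self_shuffle :: "'t list set \<Rightarrow> 't list set" where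
  "self_shuffle L = (\<Union>x\<in>L. shuffles x x)"

text \<open>Context-free grammars: a finite set of productions A -> alpha with
  nonterminals (nat) and terminals 't; sentential forms are lists of
  Inl nonterminal / Inr terminal.\<close>

inductive cfg_step :: "(nat \<times> (nat + 't) list) set \<Rightarrow> (nat + 't) list \<Rightarrow> (nat + 't) list \<Rightarrow> bool"
  for P where
  "(A, alpha) \<in> P \<Longrightarrow> cfg_step P (u @ [Inl A] @ v) (u @ alpha @ v)"

definition cfg_lang :: "(nat \<times> (nat + 't) list) set \<Rightarrow> nat \<Rightarrow> 't list set" where
  "cfg_lang P S = {w. (cfg_step P)\<^sup>*\<^sup>* [Inl S] (map Inr w)}"

definition context_free :: "'t list set \<Rightarrow> bool" where
  "context_free L \<longleftrightarrow> (\<exists>P S. finite P \<and> L = cfg_lang P S)"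

definition regular :: "'t list set \<Rightarrow> bool" where
  "regular L \<longleftrightarrow> (\<exists>(Q::nat set) \<delta> q0 F. finite Q \<and> q0 \<in> Q \<and> F \<subseteq> Q \<and>
      (\<forall>q\<in>Q. \<forall>a. \<delta> q a \<in> Q) \<and> L = {w. foldl \<delta> q0 w \<in> F})"

end

theory Submission
  imports Defs
begin


definition Buf :: "'a list \<Rightarrow> 'a list set" where
  "Buf z = {b. \<exists>x. z \<in> shuffles (b @ x) x}"

lemma Buf_step:
  assumes "b \<in> Buf (c # z)"
  shows "(b \<noteq> [] \<and> hd b = c \<and> tl b \<in> Buf z) \<or> b @ [c] \<in> Buf z"
proof -
  from assms obtain x where x: "c # z \<in> shuffles (b @ x) x" by (auto simp: Buf_def)
  from x[unfolded Cons_in_shuffles_iff] show ?thesis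
  proof
    assume h: "b @ x \<noteq> [] \<and> hd (b @ x) = c \<and> z \<in> shuffles (tl (b @ x)) x"
    show ?thesis
    proof (cases b)
      case Nil
      with h obtain x' where "x = c # x'" "z \<in> shuffles x' (c # x')"
        by (cases x) auto
      then have "z \<in> shuffles ([c] @ x') x'" by (simp add: shuffles_commutes)
      then show ?thesis using Nil by (auto simp: Buf_def)
    next
      case (Cons b0 bs)
      with h show ?thesis by (auto simp: Buf_def)
    qed
  next
    assume h: "x \<noteq> [] \<and> hd x = c \<and> z \<in> shuffles (b @ x) (tl x)"
    then obtain x' where "x = c # x'" "z \<in> shuffles (b @ c # x') x'" by (cases x) auto
    then have "z \<in> shuffles ((b @ [c]) @ x') x'" by simp
    then show ?thesis by (auto simp: Buf_def)
  qed
qed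

lemma Buf_block:
  "b \<in> Buf (replicate n c @ z) \<Longrightarrow>
   \<exists>i\<le>n. take i (b @ replicate (n - i) c) = replicate i c \<and> drop i (b @ replicate (n - i) c) \<in> Buf z"
proof (induction n arbitrary: b)
  case 0
  then show ?case by auto
next
  case (Suc n)
  from Buf_step[of b c "replicate n c @ z"] Suc.prems
  have "(b \<noteq> [] \<and> hd b = c \<and> tl b \<in> Buf (replicate n c @ z)) \<or> b @ [c] \<in> Buf (replicate n c @ z)"
    by simp
  then show ?case
  proof
    assume h: "b \<noteq> [] \<and> hd b = c \<and> tl b \<in> Buf (replicate n c @ z)"
    then obtain i where i: "i \<le> n" "take i (tl b @ replicate (n - i) c) = replicate i c"
      "drop i (tl b @ replicate (n - i) c) \<in> Buf z" using Suc.IH by blast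
    from h have b: "b = c # tl b" by (cases b) auto
    have e: "b @ replicate (Suc n - Suc i) c = c # (tl b @ replicate (n - i) c)"
      by (subst b) simp
    show ?case
      by (rule exI[of _ "Suc i"]) (use i in \<open>simp only: e take_Suc_Cons drop_Suc_Cons, simp\<close>)
  next
    assume h: "b @ [c] \<in> Buf (replicate n c @ z)"
    then obtain i where i: "i \<le> n" "take i ((b @ [c]) @ replicate (n - i) c) = replicate i c"
      "drop i ((b @ [c]) @ replicate (n - i) c) \<in> Buf z" using Suc.IH by blast
    have e: "(b @ [c]) @ replicate (n - i) c = b @ replicate (Suc n - i) c"
      using i(1) by (simp add: Suc_diff_le replicate_append_same[symmetric])
    show ?case by (rule exI[of _ i]) (use i e in auto)
  qed
qed

lemma Buf_Nil: "b \<in> Buf [] \<Longrightarrow> b = []"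
  by (auto simp: Buf_def)

lemma Buf_start: "z \<in> shuffles x x \<Longrightarrow> [] \<in> Buf z"
  by (auto simp: Buf_def)

lemma take_rep_nth:
  assumes "take i X = replicate i c" "j < i"
  shows "X ! j = c"
proof -
  have "length (take i X) = i" using assms(1) by simp
  then have "i \<le> length X" by simp
  then have "take i X ! j = X ! j" using assms(2) by simp
  with assms show ?thesis by simp
qed

lemma Buf_end:
  assumes "b \<in> Buf (replicate d c)"
  shows "b = replicate (length b) c \<and> length b \<le> d"
proof -
  from Buf_block[of b d c "[]"] assms obtain i where i: "i \<le> d"
    "take i (b @ replicate (d - i) c) = replicate i c" "drop i (b @ replicate (d - i) c) \<in> Buf []"
    by auto
  from Buf_Nil[OF i(3)] have "length (b @ replicate (d - i) c) \<le> i"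
    by (simp only: drop_eq_Nil)
  then have l: "length b + (d - i) \<le> i" by simp
  have "\<forall>j<length b. b ! j = c"
  proof (intro allI impI)
    fix j assume "j < length b"
    then have "(b @ replicate (d - i) c) ! j = c" using take_rep_nth[OF i(2)] l by auto
    then show "b ! j = c" using \<open>j < length b\<close> by (simp add: nth_append)
  qed
  then have "b = replicate (length b) c" by (simp add: list_eq_iff_nth_eq)
  with l i show ?thesis by simp
qed



abbreviation "rp \<equiv> replicate"

lemma set_nth_rep: "j < length X \<Longrightarrow> X ! j = c' \<Longrightarrow> c' \<in> set X"
  by (metis nth_mem)

lemma key:
  assumes mem: "rp a False @ rp P True @ rp t False @ rp s True @ rp Q False @ rp d True \<in> shuffles x x"
    and odd: "odd a" and P: "P \<ge> 1" and Q: "Q \<ge> 1"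
  shows "(P + s \<le> d \<and> t + Q \<le> a) \<or> (t \<ge> 1 \<and> P \<le> s)"
proof -
  have "[] \<in> Buf (rp a False @ (rp P True @ rp t False @ rp s True @ rp Q False @ rp d True))"
    using Buf_start[OF mem] by simp
  from Buf_block[OF this] obtain i1 where i1: "i1 \<le> a"
    "take i1 (rp (a - i1) False) = rp i1 False"
    "drop i1 (rp (a - i1) False) \<in> Buf (rp P True @ rp t False @ rp s True @ rp Q False @ rp d True)"
    by auto
  have "length (take i1 (rp (a - i1) False)) = i1" using i1(2) by simp
  then have i1le: "i1 \<le> a - i1" by simp
  define k where "k = a - 2 * i1"
  have k1: "k \<ge> 1" using odd i1le unfolding k_def by presburger
  have ka: "k \<le> a" unfolding k_def by simp
  have b1: "rp k False \<in> Buf (rp P True @ (rp t False @ rp s True @ rp Q False @ rp d True))"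
    using i1(3) unfolding k_def by (simp add: diff_diff_add mult_2)
  from Buf_block[OF b1] obtain j where j: "j \<le> P"
    "take j (rp k False @ rp (P - j) True) = rp j True"
    "drop j (rp k False @ rp (P - j) True) \<in> Buf (rp t False @ rp s True @ rp Q False @ rp d True)"
    by blast
  have j0: "j = 0"
  proof (rule ccontr)
    assume "j \<noteq> 0"
    then have "(rp k False @ rp (P - j) True) ! 0 = True" using take_rep_nth[OF j(2)] by simp
    then show False using k1 by (simp add: nth_append)
  qed
  have b2: "rp k False @ rp P True \<in> Buf (rp t False @ (rp s True @ rp Q False @ rp d True))"
    using j(3) j0 by simp
  from Buf_block[OF b2] obtain i3 where i3: "i3 \<le> t"
    "take i3 ((rp k False @ rp P True) @ rp (t - i3) False) = rp i3 False"
    "drop i3 ((rp k False @ rp P True) @ rp (t - i3) False) \<in> Buf (rp s True @ rp Q False @ rp d True)"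
    by blast
  have i3k: "i3 \<le> k"
  proof (rule ccontr)
    assume "\<not> i3 \<le> k"
    then have "((rp k False @ rp P True) @ rp (t - i3) False) ! k = False"
      using take_rep_nth[OF i3(2)] by simp
    then show False using P by (simp add: nth_append)
  qed
  define b3 where "b3 = rp (k - i3) False @ rp P True @ rp (t - i3) False"
  have b3: "b3 \<in> Buf (rp s True @ (rp Q False @ rp d True))"
    using i3(3) i3k unfolding b3_def by simp
  from Buf_block[OF b3] obtain j4 where j4: "j4 \<le> s"
    "take j4 (b3 @ rp (s - j4) True) = rp j4 True"
    "drop j4 (b3 @ rp (s - j4) True) \<in> Buf (rp Q False @ rp d True)"
    by blast
  define b4 where "b4 = drop j4 (b3 @ rp (s - j4) True)"
  from Buf_block[of b4 Q False "rp d True"] j4(3) obtain l where l: "l \<le> Q"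
    "take l (b4 @ rp (Q - l) False) = rp l False"
    "drop l (b4 @ rp (Q - l) False) \<in> Buf (rp d True)"
    unfolding b4_def by blast
  define b5 where "b5 = drop l (b4 @ rp (Q - l) False)"
  from Buf_end[of b5 d True] l(3) have b5: "b5 = rp (length b5) True" "length b5 \<le> d"
    unfolding b5_def by auto
  have nF: "False \<notin> set b5" by (subst b5(1)) simp
  show ?thesis
  proof (cases "i3 < k")
    case True
    have "j4 = 0"
    proof (rule ccontr)
      assume "j4 \<noteq> 0"
      then have "(b3 @ rp (s - j4) True) ! 0 = True" using take_rep_nth[OF j4(2)] by simp
      then show False using True by (simp add: nth_append b3_def)
    qed
    then have b4: "b4 = rp (k - i3) False @ rp P True @ rp (t - i3) False @ rp s True"
      unfolding b4_def b3_def by simp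
    have lle: "l \<le> k - i3"
    proof (rule ccontr)
      assume "\<not> l \<le> k - i3"
      then have "(b4 @ rp (Q - l) False) ! (k - i3) = False"
        using take_rep_nth[OF l(2)] by simp
      then show False using P by (simp add: nth_append b4)
    qed
    have leq: "l = k - i3"
    proof (rule ccontr)
      assume "l \<noteq> k - i3"
      with lle have "l < k - i3" by simp
      then have "False \<in> set b5" unfolding b5_def b4 by simp
      with nF show False by simp
    qed
    have b5e: "b5 = rp P True @ rp (t - i3) False @ rp s True @ rp (Q - l) False"
      unfolding b5_def b4 leq by simp
    have "t - i3 = 0" using nF unfolding b5e by (cases "t - i3 = 0") auto
    moreover have "Q - l = 0" using nF unfolding b5e by (cases "Q - l = 0") auto
    moreover have "length b5 = P + s" using calculation unfolding b5e by simp
    ultimately have "P + s \<le> d" "t + Q \<le> a" using b5(2) l(1) leq i3(1) ka i3k by auto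
    then show ?thesis by simp
  next
    case False
    with i3k have kk: "i3 = k" by simp
    have "P \<le> j4"
    proof (rule ccontr)
      assume "\<not> P \<le> j4"
      then have lt: "j4 < P" by simp
      have "b4 ! 0 = True" "b4 \<noteq> []" using lt unfolding b4_def b3_def kk by (simp_all add: nth_append)
      then have "(b4 @ rp (Q - l) False) ! 0 = True" by (simp add: nth_append)
      then have "l = 0" using take_rep_nth[OF l(2), of 0] by (cases "l = 0") auto
      then have "False \<in> set b5" unfolding b5_def using Q by simp
      with nF show False by simp
    qed
    then have "P \<le> s" using j4(1) by simp
    moreover have "t \<ge> 1" using kk i3(1) k1 by simp
    ultimately show ?thesis by simp
  qed
qed



datatype 't ptree = Lf 't | Nd nat "'t ptree list"

fun root :: "'t ptree \<Rightarrow> nat + 't" where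
  "root (Lf a) = Inr a" | "root (Nd A ts) = Inl A"

fun yld :: "'t ptree \<Rightarrow> 't list" where
  "yld (Lf a) = [a]" | "yld (Nd A ts) = concat (map yld ts)"

fun valid :: "(nat \<times> (nat + 't) list) set \<Rightarrow> 't ptree \<Rightarrow> bool" where
  "valid P (Lf a) = True"
| "valid P (Nd A ts) = ((A, map root ts) \<in> P \<and> (\<forall>t\<in>set ts. valid P t))"

fun tsize :: "'t ptree \<Rightarrow> nat" where
  "tsize (Lf a) = 1" | "tsize (Nd A ts) = Suc (sum_list (map tsize ts))"

lemma deriv_forest:
  assumes "(cfg_step P)\<^sup>*\<^sup>* \<alpha> (map Inr w)"
  shows "\<exists>ts. map root ts = \<alpha> \<and> (\<forall>t\<in>set ts. valid P t) \<and> concat (map yld ts) = w"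
  using assms
proof (induction rule: converse_rtranclp_induct)
  case base
  show ?case by (rule exI[of _ "map Lf w"]) (simp add: comp_def)
next
  case (step \<alpha> \<alpha>')
  from step.hyps(1) obtain u A v \<gamma> where e: "\<alpha> = u @ [Inl A] @ v" "\<alpha>' = u @ \<gamma> @ v" "(A, \<gamma>) \<in> P"
    by (cases rule: cfg_step.cases) blast
  from step.IH obtain ts where ts: "map root ts = \<alpha>'" "\<forall>t\<in>set ts. valid P t" "concat (map yld ts) = w"
    by blast
  from ts(1) e(2) have "map root ts = u @ (\<gamma> @ v)" by simp
  from map_eq_append_conv[THEN iffD1, OF this] obtain ts1 ts' where
    1: "ts = ts1 @ ts'" "u = map root ts1" "\<gamma> @ v = map root ts'"
    by (elim exE conjE)
  from 1(3)[symmetric] have "map root ts' = \<gamma> @ v" .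
  from map_eq_append_conv[THEN iffD1, OF this] obtain ts2 ts3 where
    2: "ts' = ts2 @ ts3" "\<gamma> = map root ts2" "v = map root ts3"
    by (elim exE conjE)
  have "map root (ts1 @ [Nd A ts2] @ ts3) = \<alpha>" using 1 2 e(1) by simp
  moreover have "\<forall>t\<in>set (ts1 @ [Nd A ts2] @ ts3). valid P t"
    using ts(2) 1 2 e(3) by auto
  moreover have "concat (map yld (ts1 @ [Nd A ts2] @ ts3)) = w"
    using ts(3) 1 2 by simp
  ultimately show ?case by blast
qed

lemma step_app: "cfg_step P a b \<Longrightarrow> cfg_step P (x @ a @ y) (x @ b @ y)"
proof (induction rule: cfg_step.induct)
  case (1 A alpha u v)
  have "cfg_step P ((x @ u) @ [Inl A] @ (v @ y)) ((x @ u) @ alpha @ (v @ y))"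
    using 1 by (rule cfg_step.intros)
  then show ?case by simp
qed

lemma steps_app: "(cfg_step P)\<^sup>*\<^sup>* a b \<Longrightarrow> (cfg_step P)\<^sup>*\<^sup>* (x @ a @ y) (x @ b @ y)"
proof (induction rule: rtranclp_induct)
  case base then show ?case by simp
next
  case (step b c)
  then show ?case using step_app[OF step(2), of x y] by (meson rtranclp.rtrancl_into_rtrancl)
qed

lemma forest_deriv:
  "(\<forall>t\<in>set ts. (cfg_step P)\<^sup>*\<^sup>* [root t] (map Inr (yld t))) \<Longrightarrow>
   (cfg_step P)\<^sup>*\<^sup>* (map root ts) (map Inr (concat (map yld ts)))"
proof (induction ts)
  case Nil then show ?case by simp
next
  case (Cons t ts)
  have 1: "(cfg_step P)\<^sup>*\<^sup>* ([] @ [root t] @ map root ts) ([] @ map Inr (yld t) @ map root ts)"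
    using Cons.prems by (intro steps_app) simp
  have 2: "(cfg_step P)\<^sup>*\<^sup>* (map Inr (yld t) @ map root ts @ []) (map Inr (yld t) @ map Inr (concat (map yld ts)) @ [])"
    using Cons by (intro steps_app) simp
  from 1 2 show ?case by simp
qed

lemma tree_deriv: "valid P t \<Longrightarrow> (cfg_step P)\<^sup>*\<^sup>* [root t] (map Inr (yld t))"
proof (induction t)
  case (Lf a) then show ?case by simp
next
  case (Nd A ts)
  have "cfg_step P ([] @ [Inl A] @ []) ([] @ map root ts @ [])"
    using Nd.prems by (intro cfg_step.intros) simp
  then have 1: "cfg_step P [Inl A] (map root ts)" by simp
  have 2: "(cfg_step P)\<^sup>*\<^sup>* (map root ts) (map Inr (concat (map yld ts)))"
    using Nd by (intro forest_deriv) auto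
  from 1 2 show ?case by simp
qed

datatype 't ctx = Hole | CNd nat "'t ptree list" "'t ctx" "'t ptree list"

fun fill :: "'t ctx \<Rightarrow> 't ptree \<Rightarrow> 't ptree" where
  "fill Hole s = s" | "fill (CNd A l c r) s = Nd A (l @ [fill c s] @ r)"

fun lyld :: "'t ctx \<Rightarrow> 't list" where
  "lyld Hole = []" | "lyld (CNd A l c r) = concat (map yld l) @ lyld c"

fun ryld :: "'t ctx \<Rightarrow> 't list" where
  "ryld Hole = []" | "ryld (CNd A l c r) = ryld c @ concat (map yld r)"

fun csize :: "'t ctx \<Rightarrow> nat" where
  "csize Hole = 0" | "csize (CNd A l c r) = Suc (sum_list (map tsize l) + csize c + sum_list (map tsize r))"

lemma yld_fill: "yld (fill c s) = lyld c @ yld s @ ryld c"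
  by (induction c) auto

lemma tsize_fill: "tsize (fill c s) = csize c + tsize s"
  by (induction c) auto

lemma root_fill: "root s = root s' \<Longrightarrow> root (fill c s) = root (fill c s')"
  by (cases c) auto

lemma valid_fill: "valid P (fill c s) \<Longrightarrow> root s = root s' \<Longrightarrow> valid P s' \<Longrightarrow> valid P (fill c s')"
proof (induction c)
  case Hole then show ?case by simp
next
  case (CNd A l c r)
  have "root (fill c s) = root (fill c s')" using CNd.prems(2) by (rule root_fill)
  with CNd show ?case by auto
qed

lemma valid_fill_sub: "valid P (fill c s) \<Longrightarrow> valid P s"
  by (induction c) auto

fun cpow :: "'t ctx \<Rightarrow> nat \<Rightarrow> 't ptree \<Rightarrow> 't ptree" where
  "cpow c 0 s = s" | "cpow c (Suc n) s = fill c (cpow c n s)"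

lemma cpow_props:
  assumes "valid P (fill c s)" "root (fill c s) = root s"
  shows "valid P (cpow c n s) \<and> root (cpow c n s) = root s \<and>
         yld (cpow c n s) = concat (replicate n (lyld c)) @ yld s @ concat (replicate n (ryld c))"
proof (induction n)
  case 0 then show ?case using valid_fill_sub[OF assms(1)] by simp
next
  case (Suc n)
  have v: "valid P (fill c (cpow c n s))"
    using valid_fill[OF assms(1)] Suc by simp
  have r: "root (fill c (cpow c n s)) = root (fill c s)" using Suc by (intro root_fill) simp
  have cr: "\<And>r. concat (replicate (Suc n) r) = concat (replicate n r) @ r"
    by (induction n) auto
  show ?case using v r Suc assms(2) by (simp only: cr[of "ryld c"] cpow.simps yld_fill) simp
qed

fun dp :: "nat set \<Rightarrow> 't ptree \<Rightarrow> bool" where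
  "dp X (Lf a) = True"
| "dp X (Nd A ts) = (A \<notin> X \<and> (\<forall>t\<in>set ts. dp (insert A X) t))"

fun lbls :: "'t ptree \<Rightarrow> nat set" where
  "lbls (Lf a) = {}" | "lbls (Nd A ts) = insert A (\<Union>t\<in>set ts. lbls t)"

lemma dp_iff: "dp X t \<longleftrightarrow> dp {} t \<and> lbls t \<inter> X = {}"
proof (induction t arbitrary: X)
  case (Lf a) then show ?case by simp
next
  case (Nd A ts)
  have h1: "dp (insert A X) t \<longleftrightarrow> dp {} t \<and> lbls t \<inter> insert A X = {}" if "t \<in> set ts" for t
    using Nd.IH[OF that, of "insert A X"] .
  have h2: "dp {A} t \<longleftrightarrow> dp {} t \<and> lbls t \<inter> {A} = {}" if "t \<in> set ts" for t
    using Nd.IH[OF that, of "{A}"] .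
  have e1: "dp X (Nd A ts) \<longleftrightarrow> A \<notin> X \<and> (\<forall>t\<in>set ts. dp (insert A X) t)" by simp
  have e2: "dp {} (Nd A ts) \<longleftrightarrow> (\<forall>t\<in>set ts. dp {A} t)" by simp
  have e3: "lbls (Nd A ts) \<inter> X = {} \<longleftrightarrow> A \<notin> X \<and> (\<forall>t\<in>set ts. lbls t \<inter> X = {})" by auto
  show ?case unfolding e1 e2 e3 using h1 h2 by blast
qed

lemma lbl_ctx: "A \<in> lbls t \<Longrightarrow> \<exists>c ts'. t = fill c (Nd A ts')"
proof (induction t)
  case (Lf a) then show ?case by simp
next
  case (Nd B ts)
  show ?case
  proof (cases "A = B")
    case True then show ?thesis by (intro exI[of _ Hole]) auto
  next
    case False
    with Nd.prems obtain s where s: "s \<in> set ts" "A \<in> lbls s" by auto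
    from Nd.IH[OF s] obtain c ts' where c: "s = fill c (Nd A ts')" by blast
    from split_list[OF s(1)] obtain l r where "ts = l @ s # r" by blast
    then show ?thesis using c by (intro exI[of _ "CNd B l c r"]) auto
  qed
qed

lemma find_rep: "\<not> dp {} t \<Longrightarrow> \<exists>c A ts. t = fill c (Nd A ts) \<and> (\<forall>s\<in>set ts. dp {} s) \<and> (\<exists>s\<in>set ts. A \<in> lbls s)"
proof (induction t)
  case (Lf a) then show ?case by simp
next
  case (Nd B ts)
  show ?case
  proof (cases "\<exists>s\<in>set ts. \<not> dp {} s")
    case True
    then obtain s where s: "s \<in> set ts" "\<not> dp {} s" by blast
    from Nd.IH[OF s] obtain c A ts' where c: "s = fill c (Nd A ts')" "\<forall>s\<in>set ts'. dp {} s"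
      "\<exists>s\<in>set ts'. A \<in> lbls s" by blast
    from split_list[OF s(1)] obtain l r where "ts = l @ s # r" by blast
    then show ?thesis using c by (intro exI[of _ "CNd B l c r"]) auto
  next
    case False
    then have a: "\<forall>s\<in>set ts. dp {} s" by blast
    from Nd.prems have "\<exists>s\<in>set ts. \<not> dp {B} s" by simp
    then obtain s where "s \<in> set ts" "\<not> dp {B} s" by blast
    then have "B \<in> lbls s" using a dp_iff[of "{B}" s] by auto
    then show ?thesis using a \<open>s \<in> set ts\<close> by (intro exI[of _ Hole]) auto
  qed
qed

lemma lbls_valid: "valid P t \<Longrightarrow> lbls t \<subseteq> fst ` P"
proof (induction t)
  case (Lf a) then show ?case by simp
next
  case (Nd A ts)
  then have "A \<in> fst ` P" by (force intro: rev_image_eqI)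
  moreover have "\<forall>t\<in>set ts. lbls t \<subseteq> fst ` P" using Nd by simp
  ultimately show ?case by auto
qed

lemma sum_list_le: "(\<forall>x\<in>set xs. f x \<le> (B::nat)) \<Longrightarrow> sum_list (map f xs) \<le> length xs * B"
  by (induction xs) auto

lemma length_concat_yld: "length (concat (map yld ts)) = sum_list (map (\<lambda>t. length (yld t)) ts)"
  by (induction ts) auto

lemma dp_bound:
  assumes fin: "finite N" and m: "m \<ge> 1" and rhs: "\<forall>(A, \<gamma>)\<in>P. length \<gamma> \<le> m"
  shows "valid P t \<Longrightarrow> dp X t \<Longrightarrow> lbls t \<subseteq> N \<Longrightarrow> length (yld t) \<le> m ^ card (N - X)"
proof (induction t arbitrary: X)
  case (Lf a) then show ?case using m by simp
next
  case (Nd A ts)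
  let ?c = "card (N - X)"
  have AN: "A \<in> N - X" using Nd.prems by auto
  then have "?c > 0" using fin by (auto simp: card_gt_0_iff)
  then have c1: "?c \<ge> 1" by simp
  have "N - insert A X = (N - X) - {A}" by auto
  then have ce: "card (N - insert A X) = ?c - 1"
    using AN fin by simp
  have ch: "\<forall>t\<in>set ts. length (yld t) \<le> m ^ (?c - 1)"
  proof
    fix t assume t: "t \<in> set ts"
    have "length (yld t) \<le> m ^ card (N - insert A X)"
      using Nd.IH[OF t, of "insert A X"] Nd.prems t by auto
    then show "length (yld t) \<le> m ^ (?c - 1)" using ce by simp
  qed
  have lts: "length ts \<le> m" using Nd.prems(1) rhs by force
  have "length (yld (Nd A ts)) \<le> length ts * m ^ (?c - 1)"
    using sum_list_le[OF ch] by (simp add: length_concat_yld)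
  also have "\<dots> \<le> m * m ^ (?c - 1)" using lts by simp
  also have "\<dots> = m ^ ?c" using c1 by (cases ?c) auto
  finally show ?case .
qed



theorem pumping:
  assumes finP: "finite P"
  shows "\<exists>p. \<forall>w \<in> cfg_lang P S. p < length w \<longrightarrow>
    (\<exists>u v w' x y. w = u @ v @ w' @ x @ y \<and> v @ x \<noteq> [] \<and> length (v @ w' @ x) \<le> p \<and>
       (\<forall>i. u @ concat (replicate i v) @ w' @ concat (replicate i x) @ y \<in> cfg_lang P S))"
proof -
  define N where "N = fst ` P"
  have finN: "finite N" unfolding N_def using finP by simp
  define m where "m = Max (insert 1 ((\<lambda>(A, \<gamma>). length \<gamma>) ` P))"
  have finM: "finite (insert 1 ((\<lambda>(A, \<gamma>). length \<gamma>) ` P))" using finP by simp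
  have m1: "m \<ge> 1" unfolding m_def using finM by simp
  have rhs: "\<forall>(A, \<gamma>)\<in>P. length \<gamma> \<le> m"
  proof
    fix pr assume "pr \<in> P"
    then show "case pr of (A, \<gamma>) \<Rightarrow> length \<gamma> \<le> m"
      unfolding m_def using finM by (cases pr) (auto intro!: Max_ge)
  qed
  define p where "p = m ^ Suc (card N)"
  show ?thesis
  proof (rule exI[of _ p], intro ballI impI)
    fix w assume wL: "w \<in> cfg_lang P S" and wl: "p < length w"
    from wL have "(cfg_step P)\<^sup>*\<^sup>* [Inl S] (map Inr w)" by (simp add: cfg_lang_def)
    note df = deriv_forest[OF this]
    from df obtain ts where ts: "map root ts = [Inl S]" "\<forall>t\<in>set ts. valid P t"
      "concat (map yld ts) = w" by (elim exE conjE)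
    from ts(1) obtain t where "ts = [t]" by (cases ts) auto
    with ts have ex: "valid P t \<and> root t = Inl S \<and> yld t = w" by simp
    from ex_has_least_nat[of "\<lambda>t. valid P t \<and> root t = Inl S \<and> yld t = w", OF ex, of tsize]
    obtain t0 where t0: "valid P t0" "root t0 = Inl S" "yld t0 = w"
      and minimal: "\<And>t'. valid P t' \<and> root t' = Inl S \<and> yld t' = w \<Longrightarrow> tsize t0 \<le> tsize t'"
      by blast
    have ndp: "\<not> dp {} t0"
    proof
      assume "dp {} t0"
      moreover have "lbls t0 \<subseteq> N" using lbls_valid[OF t0(1)] unfolding N_def .
      ultimately have "length (yld t0) \<le> m ^ card (N - {})"
        using dp_bound[OF finN m1 rhs t0(1)] by blast
      also have "\<dots> \<le> p" unfolding p_def using m1 by (simp add: power_increasing)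
      finally show False using wl t0(3) by simp
    qed
    from find_rep[OF ndp] obtain c1 A ts where c1: "t0 = fill c1 (Nd A ts)"
      "\<forall>s\<in>set ts. dp {} s" "\<exists>s\<in>set ts. A \<in> lbls s" by blast
    from c1(3) obtain s where s: "s \<in> set ts" "A \<in> lbls s" by blast
    from lbl_ctx[OF s(2)] obtain c' ts' where c': "s = fill c' (Nd A ts')" by blast
    from split_list[OF s(1)] obtain l r where lr: "ts = l @ s # r" by blast
    define c2 where "c2 = CNd A l c' r"
    define T where "T = Nd A ts'"
    have NT: "Nd A ts = fill c2 T" unfolding c2_def T_def using lr c' by simp
    have t0e: "t0 = fill c1 (fill c2 T)" using c1(1) NT by simp
    have vNd: "valid P (Nd A ts)" using valid_fill_sub t0(1) c1(1) by blast
    have v2: "valid P (fill c2 T)" using vNd NT by simp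
    have r2: "root (fill c2 T) = root T" unfolding c2_def T_def by simp
    have vt0: "valid P (fill c1 (fill c2 T))" using t0(1) t0e by simp
    define u where "u = lyld c1"
    define v where "v = lyld c2"
    define w' where "w' = yld T"
    define x where "x = ryld c2"
    define y where "y = ryld c1"
    have wdec: "w = u @ v @ w' @ x @ y"
      using t0(3) t0e by (simp add: yld_fill u_def v_def w'_def x_def y_def)
    have pump: "u @ concat (replicate i v) @ w' @ concat (replicate i x) @ y \<in> cfg_lang P S" for i
    proof -
      from cpow_props[OF v2 r2, of i] have cp: "valid P (cpow c2 i T)" "root (cpow c2 i T) = root T"
        "yld (cpow c2 i T) = concat (replicate i (lyld c2)) @ yld T @ concat (replicate i (ryld c2))"
        by auto
      have rr: "root (fill c2 T) = root (cpow c2 i T)" using cp(2) r2 by simp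
      have vi: "valid P (fill c1 (cpow c2 i T))" using valid_fill[OF vt0 rr cp(1)] .
      have ri: "root (fill c1 (cpow c2 i T)) = Inl S"
        using root_fill[OF rr, of c1] t0(2) t0e by simp
      have "(cfg_step P)\<^sup>*\<^sup>* [root (fill c1 (cpow c2 i T))] (map Inr (yld (fill c1 (cpow c2 i T))))"
        using tree_deriv[OF vi] .
      then show ?thesis using ri cp(3)
        by (simp add: cfg_lang_def yld_fill u_def v_def w'_def x_def y_def)
    qed
    have ne: "v @ x \<noteq> []"
    proof
      assume vx: "v @ x = []"
      have rr: "root (fill c2 T) = root T" using r2 .
      have v1: "valid P (fill c1 T)" using valid_fill[OF vt0 rr] valid_fill_sub[OF v2] by blast
      have "root (fill c1 T) = root (fill c1 (fill c2 T))" using root_fill[of T "fill c2 T" c1] rr by simp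
      then have ro: "root (fill c1 T) = Inl S" using t0(2) t0e by simp
      have yo: "yld (fill c1 T) = w" using wdec vx by (simp add: yld_fill u_def w'_def y_def)
      have "tsize t0 \<le> tsize (fill c1 T)" using minimal v1 ro yo by blast
      moreover have "tsize (fill c1 T) < tsize t0"
        unfolding t0e by (simp add: tsize_fill c2_def)
      ultimately show False by simp
    qed
    have len: "length (v @ w' @ x) \<le> p"
    proof -
      have "length (v @ w' @ x) = length (yld (Nd A ts))"
        using NT by (simp add: yld_fill v_def w'_def x_def)
      also have "\<dots> = sum_list (map (\<lambda>t. length (yld t)) ts)" by (simp add: length_concat_yld)
      also have "\<dots> \<le> length ts * m ^ card N"
      proof (rule sum_list_le, rule ballI)
        fix t assume t: "t \<in> set ts"
        have vt: "valid P t" using vNd t by simp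
        have "lbls t \<subseteq> N" using lbls_valid[OF vt] unfolding N_def .
        then have "length (yld t) \<le> m ^ card (N - {})"
          using dp_bound[OF finN m1 rhs vt] c1(2) t by blast
        then show "length (yld t) \<le> m ^ card N" by simp
      qed
      also have "\<dots> \<le> m * m ^ card N"
      proof -
        have "(A, map root ts) \<in> P" using vNd by simp
        then have "length ts \<le> m" using rhs by fastforce
        then show ?thesis by simp
      qed
      also have "\<dots> = p" unfolding p_def by simp
      finally show ?thesis .
    qed
    show "\<exists>u v w' x y. w = u @ v @ w' @ x @ y \<and> v @ x \<noteq> [] \<and> length (v @ w' @ x) \<le> p \<and>
       (\<forall>i. u @ concat (replicate i v) @ w' @ concat (replicate i x) @ y \<in> cfg_lang P S)"
      using wdec ne len pump by blast
  qed
qed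



lemma parity: "W \<in> shuffles X X \<Longrightarrow> even (length (filter Not W))"
proof -
  assume "W \<in> shuffles X X"
  then have "filter Not W \<in> filter Not ` shuffles X X" by blast
  then have "filter Not W \<in> shuffles (filter Not X) (filter Not X)" by (simp add: filter_shuffles)
  then show ?thesis using length_shuffles by fastforce
qed

lemma winA:
  fixes q p \<alpha> \<delta> b1 b2 b3 g1 g2 g3 :: nat
  assumes q: "odd q" "p < q"
    and s1: "\<alpha> + (b1 + b2 + b3) + \<delta> = q" and s2: "b1 + b2 + b3 + (g1 + g2 + g3) \<le> p"
    and c1: "0 < g1 \<longrightarrow> b2 = 0 \<and> b3 = 0" and c2: "0 < g2 \<longrightarrow> b3 = 0"
    and c3: "0 < g1 + g2 + g3 \<longrightarrow> \<delta> = 0"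
    and ne: "v @ x \<noteq> []"
    and u: "u = rp \<alpha> False" and v: "v = rp b1 False @ rp g1 True"
    and w: "w = rp b2 False @ rp g2 True" and x: "x = rp b3 False @ rp g3 True"
    and y: "y = rp \<delta> False @ rp (q - (g1 + g2 + g3)) True @ rp q False @ rp q True"
    and Z0: "u @ w @ y \<in> shuffles X0 X0" and Z2: "u @ v @ v @ w @ x @ x @ y \<in> shuffles X2 X2"
  shows False
proof -
  define \<gamma> where "\<gamma> = g1 + g2 + g3"
  have e0: "u @ w @ y = rp (\<alpha> + b2 + \<delta>) False @ rp (g2 + (q - \<gamma>)) True @ rp 0 False @ rp 0 True @ rp q False @ rp q True"
  proof (cases "g2 = 0")
    case True then show ?thesis by (simp add: u w y \<gamma>_def replicate_add)
  next
    case False then have "\<delta> = 0" using c3 by simp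
    then show ?thesis by (simp add: u w y \<gamma>_def replicate_add)
  qed
  have "even (length (filter Not (u @ w @ y)))" using parity[OF Z0] .
  then have "even (\<alpha> + b2 + \<delta> + q)" unfolding e0 by (simp add: filter_replicate)
  then have oa: "odd (\<alpha> + b2 + \<delta>)" using q(1) by simp
  have "(g2 + (q - \<gamma>) + 0 \<le> q \<and> 0 + q \<le> \<alpha> + b2 + \<delta>) \<or> (0 \<ge> (1::nat) \<and> g2 + (q - \<gamma>) \<le> 0)"
    using key[OF Z0[unfolded e0] oa] q s2 unfolding \<gamma>_def by simp
  then have "q \<le> \<alpha> + b2 + \<delta>" using q s2 unfolding \<gamma>_def by auto
  then have b13: "b1 = 0" "b3 = 0" using s1 by auto
  show False
  proof (cases "0 < g1")
    case True
    then have z: "b2 = 0" "\<delta> = 0" using c1 c3 by auto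
    then have aq: "\<alpha> = q" using s1 b13 by simp
    have e2: "u @ v @ v @ w @ x @ x @ y = rp q False @ rp (g1 + g1 + g2 + g3 + g3 + (q - \<gamma>)) True @ rp 0 False @ rp 0 True @ rp q False @ rp q True"
      by (simp add: u v w x y z b13 aq \<gamma>_def replicate_add)
    have "(g1 + g1 + g2 + g3 + g3 + (q - \<gamma>) + 0 \<le> q \<and> 0 + q \<le> q) \<or> (0 \<ge> (1::nat) \<and> g1 + g1 + g2 + g3 + g3 + (q - \<gamma>) \<le> 0)"
      using key[OF Z2[unfolded e2]] q s2 True unfolding \<gamma>_def by simp
    then show False using True q s2 unfolding \<gamma>_def by auto
  next
    case False
    then have g1: "g1 = 0" by simp
    show False
    proof (cases "0 < g3")
      case True
      then have z: "\<delta> = 0" using c3 by auto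
      have e2: "u @ v @ v @ w @ x @ x @ y = rp (\<alpha> + b2) False @ rp (g2 + g3 + g3 + (q - \<gamma>)) True @ rp 0 False @ rp 0 True @ rp q False @ rp q True"
        by (simp add: u v w x y z b13 g1 \<gamma>_def replicate_add)
      have o2: "odd (\<alpha> + b2)" using oa z by simp
      have "(g2 + g3 + g3 + (q - \<gamma>) + 0 \<le> q \<and> 0 + q \<le> \<alpha> + b2) \<or> (0 \<ge> (1::nat) \<and> g2 + g3 + g3 + (q - \<gamma>) \<le> 0)"
        using key[OF Z2[unfolded e2] o2] q s2 True unfolding \<gamma>_def by simp
      then show False using True q s2 g1 unfolding \<gamma>_def by auto
    next
      case False
      then have "g3 = 0" by simp
      then show False using ne b13 g1 v x by simp
    qed
  qed
qed

lemma winB: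
  fixes q p \<alpha> \<delta> b1 b2 b3 g1 g2 g3 :: nat
  assumes q: "odd q" "p < q"
    and s1: "\<alpha> + (b1 + b2 + b3) + \<delta> = q" and s2: "b1 + b2 + b3 + (g1 + g2 + g3) \<le> p"
    and c1: "0 < g1 \<longrightarrow> b2 = 0 \<and> b3 = 0" and c2: "0 < g2 \<longrightarrow> b3 = 0"
    and c3: "0 < g1 + g2 + g3 \<longrightarrow> \<delta> = 0"
    and ne: "v @ x \<noteq> []"
    and u: "u = rp q False @ rp \<alpha> True" and v: "v = rp b1 True @ rp g1 False"
    and w: "w = rp b2 True @ rp g2 False" and x: "x = rp b3 True @ rp g3 False"
    and y: "y = rp \<delta> True @ rp (q - (g1 + g2 + g3)) False @ rp q True"
    and Z2: "u @ v @ v @ w @ x @ x @ y \<in> shuffles X2 X2"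
  shows False
proof -
  define \<gamma> where "\<gamma> = g1 + g2 + g3"
  show False
  proof (cases "0 < g1")
    case True
    then have z: "b2 = 0" "b3 = 0" "\<delta> = 0" using c1 c3 by auto
    have e2: "u @ v @ v @ w @ x @ x @ y = rp q False @ rp (\<alpha> + b1) True @ rp g1 False @ rp b1 True @ rp (g1 + g2 + g3 + g3 + (q - \<gamma>)) False @ rp q True"
      by (simp add: u v w x y z \<gamma>_def replicate_add)
    have "((\<alpha> + b1) + b1 \<le> q \<and> g1 + (g1 + g2 + g3 + g3 + (q - \<gamma>)) \<le> q) \<or> (g1 \<ge> 1 \<and> \<alpha> + b1 \<le> b1)"
      using key[OF Z2[unfolded e2]] q s1 s2 z True unfolding \<gamma>_def by simp
    then show False using True q s1 s2 z unfolding \<gamma>_def by auto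
  next
    case False
    then have g1: "g1 = 0" by simp
    show False
    proof (cases "0 < g2")
      case True
      then have z: "b3 = 0" "\<delta> = 0" using c2 c3 by auto
      have e2: "u @ v @ v @ w @ x @ x @ y = rp q False @ rp (\<alpha> + b1 + b1 + b2) True @ rp 0 False @ rp 0 True @ rp (g2 + g3 + g3 + (q - \<gamma>)) False @ rp q True"
        by (simp add: u v w x y z g1 \<gamma>_def replicate_add)
      have "((\<alpha> + b1 + b1 + b2) + 0 \<le> q \<and> 0 + (g2 + g3 + g3 + (q - \<gamma>)) \<le> q) \<or> (0 \<ge> (1::nat) \<and> \<alpha> + b1 + b1 + b2 \<le> 0)"
        using key[OF Z2[unfolded e2]] q s1 s2 z True g1 unfolding \<gamma>_def by simp
      then have "b1 = 0" "g3 = 0" using True q s1 s2 z g1 unfolding \<gamma>_def by auto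
      then show False using ne g1 z v x by simp
    next
      case False
      then have g2: "g2 = 0" by simp
      show False
      proof (cases "0 < g3")
        case True
        then have z: "\<delta> = 0" using c3 by auto
        have e2: "u @ v @ v @ w @ x @ x @ y = rp q False @ rp (\<alpha> + b1 + b1 + b2 + b3) True @ rp g3 False @ rp b3 True @ rp (g3 + (q - \<gamma>)) False @ rp q True"
          by (simp add: u v w x y z g1 g2 \<gamma>_def replicate_add)
        have "((\<alpha> + b1 + b1 + b2 + b3) + b3 \<le> q \<and> g3 + (g3 + (q - \<gamma>)) \<le> q) \<or> (g3 \<ge> 1 \<and> \<alpha> + b1 + b1 + b2 + b3 \<le> b3)"
          using key[OF Z2[unfolded e2]] q s1 s2 z True g1 g2 unfolding \<gamma>_def by simp
        then show False using True q s1 s2 z g1 g2 unfolding \<gamma>_def by auto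
      next
        case False
        then have g3: "g3 = 0" by simp
        have e2: "u @ v @ v @ w @ x @ x @ y = rp q False @ rp (\<alpha> + b1 + b1 + b2 + b3 + b3 + \<delta>) True @ rp 0 False @ rp 0 True @ rp q False @ rp q True"
          by (simp add: u v w x y g1 g2 g3 \<gamma>_def replicate_add)
        have "((\<alpha> + b1 + b1 + b2 + b3 + b3 + \<delta>) + 0 \<le> q \<and> 0 + q \<le> q) \<or> (0 \<ge> (1::nat) \<and> \<alpha> + b1 + b1 + b2 + b3 + b3 + \<delta> \<le> 0)"
          using key[OF Z2[unfolded e2]] q s1 s2 unfolding \<gamma>_def by simp
        then have "b1 = 0" "b3 = 0" using q s1 s2 unfolding \<gamma>_def by auto
        then show False using ne g1 g3 v x by simp
      qed
    qed
  qed
qed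

lemma winC:
  fixes q p \<alpha> \<delta> b1 b2 b3 g1 g2 g3 :: nat
  assumes q: "odd q" "p < q"
    and s1: "\<alpha> + (b1 + b2 + b3) + \<delta> = q" and s2: "b1 + b2 + b3 + (g1 + g2 + g3) \<le> p"
    and c1: "0 < g1 \<longrightarrow> b2 = 0 \<and> b3 = 0" and c2: "0 < g2 \<longrightarrow> b3 = 0"
    and c3: "0 < g1 + g2 + g3 \<longrightarrow> \<delta> = 0"
    and ne: "v @ x \<noteq> []"
    and u: "u = rp q False @ rp q True @ rp \<alpha> False" and v: "v = rp b1 False @ rp g1 True"
    and w: "w = rp b2 False @ rp g2 True" and x: "x = rp b3 False @ rp g3 True"
    and y: "y = rp \<delta> False @ rp (q - (g1 + g2 + g3)) True"
    and Z0: "u @ w @ y \<in> shuffles X0 X0" and Z2: "u @ v @ v @ w @ x @ x @ y \<in> shuffles X2 X2"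
  shows False
proof -
  define \<gamma> where "\<gamma> = g1 + g2 + g3"
  have e0: "u @ w @ y = rp q False @ rp q True @ rp 0 False @ rp 0 True @ rp (\<alpha> + b2 + \<delta>) False @ rp (g2 + (q - \<gamma>)) True"
  proof (cases "g2 = 0")
    case True then show ?thesis by (simp add: u w y \<gamma>_def replicate_add)
  next
    case False then have "\<delta> = 0" using c3 by simp
    then show ?thesis by (simp add: u w y \<gamma>_def replicate_add)
  qed
  have "(q + 0 \<le> g2 + (q - \<gamma>) \<and> 0 + (\<alpha> + b2 + \<delta>) \<le> q) \<or> (0 \<ge> (1::nat) \<and> q \<le> 0)"
    using key[OF Z0[unfolded e0]] q s1 s2 unfolding \<gamma>_def by simp
  then have "q \<le> g2 + (q - \<gamma>)" by auto
  then have g13: "g1 = 0" "g3 = 0" using q s2 unfolding \<gamma>_def by auto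
  show False
  proof (cases "0 < g2")
    case True
    then have z: "b3 = 0" "\<delta> = 0" using c2 c3 by auto
    have e2: "u @ v @ v @ w @ x @ x @ y = rp q False @ rp q True @ rp 0 False @ rp 0 True @ rp (\<alpha> + b1 + b1 + b2) False @ rp (g2 + (q - \<gamma>)) True"
      by (simp add: u v w x y z g13 \<gamma>_def replicate_add)
    have "(q + 0 \<le> g2 + (q - \<gamma>) \<and> 0 + (\<alpha> + b1 + b1 + b2) \<le> q) \<or> (0 \<ge> (1::nat) \<and> q \<le> 0)"
      using key[OF Z2[unfolded e2]] q s1 s2 z unfolding \<gamma>_def by simp
    then have "b1 = 0" using s1 z by auto
    then show False using ne g13 z v x by simp
  next
    case False
    then have g2: "g2 = 0" by simp
    have e2: "u @ v @ v @ w @ x @ x @ y = rp q False @ rp q True @ rp 0 False @ rp 0 True @ rp (\<alpha> + b1 + b1 + b2 + b3 + b3 + \<delta>) False @ rp (q - \<gamma>) True"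
      by (simp add: u v w x y g13 g2 \<gamma>_def replicate_add)
    have "(q + 0 \<le> q - \<gamma> \<and> 0 + (\<alpha> + b1 + b1 + b2 + b3 + b3 + \<delta>) \<le> q) \<or> (0 \<ge> (1::nat) \<and> q \<le> 0)"
      using key[OF Z2[unfolded e2]] q s1 s2 unfolding \<gamma>_def by simp
    then have "b1 = 0" "b3 = 0" using s1 by auto
    then show False using ne g13 v x by simp
  qed
qed

lemma winD:
  fixes q p \<alpha> \<delta> b1 b2 b3 :: nat
  assumes q: "odd q" "p < q"
    and s1: "\<alpha> + (b1 + b2 + b3) + \<delta> = q"
    and ne: "v @ x \<noteq> []"
    and u: "u = rp q False @ rp q True @ rp q False @ rp \<alpha> True" and v: "v = rp b1 True"
    and w: "w = rp b2 True" and x: "x = rp b3 True"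
    and y: "y = rp \<delta> True"
    and Z0: "u @ w @ y \<in> shuffles X0 X0"
  shows False
proof -
  have e0: "u @ w @ y = rp q False @ rp q True @ rp 0 False @ rp 0 True @ rp q False @ rp (\<alpha> + b2 + \<delta>) True"
    by (simp add: u w y replicate_add)
  have "(q + 0 \<le> \<alpha> + b2 + \<delta> \<and> 0 + q \<le> q) \<or> (0 \<ge> (1::nat) \<and> q \<le> 0)"
    using key[OF Z0[unfolded e0]] q by simp
  then have "b1 = 0" "b3 = 0" using s1 by auto
  then show False using ne v x by simp
qed



lemma F2:
  assumes "xs @ ys = rp \<beta> c @ rp \<gamma> d"
  shows "\<exists>b1 g1 b2 g2. xs = rp b1 c @ rp g1 d \<and> ys = rp b2 c @ rp g2 d \<and> b1 + b2 = \<beta> \<and> g1 + g2 = \<gamma> \<and> (0 < g1 \<longrightarrow> b2 = 0)"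
proof -
  define k where "k = length xs"
  have xs: "xs = take k (rp \<beta> c @ rp \<gamma> d)" unfolding k_def using assms[symmetric] by simp
  have ys: "ys = drop k (rp \<beta> c @ rp \<gamma> d)" unfolding k_def using assms[symmetric] by simp
  have kl: "k \<le> \<beta> + \<gamma>" unfolding k_def using arg_cong[OF assms, of length] by simp
  show ?thesis
    by (rule exI[of _ "min k \<beta>"], rule exI[of _ "min (k - \<beta>) \<gamma>"], rule exI[of _ "\<beta> - k"],
        rule exI[of _ "\<gamma> - (k - \<beta>)"]) (use xs ys kl in auto)
qed

lemma F3:
  assumes "v @ w @ x = rp \<beta> c @ rp \<gamma> d"
  shows "\<exists>b1 g1 b2 g2 b3 g3. v = rp b1 c @ rp g1 d \<and> w = rp b2 c @ rp g2 d \<and> x = rp b3 c @ rp g3 d \<and>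
     b1 + b2 + b3 = \<beta> \<and> g1 + g2 + g3 = \<gamma> \<and> (0 < g1 \<longrightarrow> b2 = 0 \<and> b3 = 0) \<and> (0 < g2 \<longrightarrow> b3 = 0)"
proof -
  from F2[OF assms] obtain b1 g1 b' g' where 1: "v = rp b1 c @ rp g1 d" "w @ x = rp b' c @ rp g' d"
    "b1 + b' = \<beta>" "g1 + g' = \<gamma>" "0 < g1 \<longrightarrow> b' = 0" by blast
  from F2[OF 1(2)] obtain b2 g2 b3 g3 where 2: "w = rp b2 c @ rp g2 d" "x = rp b3 c @ rp g3 d"
    "b2 + b3 = b'" "g2 + g3 = g'" "0 < g2 \<longrightarrow> b3 = 0" by blast
  have s: "b1 + b2 + b3 = \<beta>" "g1 + g2 + g3 = \<gamma>" using 1(3,4) 2(3,4) by auto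
  have c: "0 < g1 \<longrightarrow> b2 = 0 \<and> b3 = 0" using 1(5) 2(3) by auto
  show ?thesis using 1(1) 2(1,2,5) s c by blast
qed

lemma W1:
  assumes "rp n c @ R = u @ m @ y"
  shows "(\<exists>u'. u = rp n c @ u' \<and> R = u' @ m @ y) \<or>
         (\<exists>\<alpha> \<beta> \<delta>. \<alpha> + \<beta> + \<delta> = n \<and> u = rp \<alpha> c \<and> m = rp \<beta> c \<and> y = rp \<delta> c @ R) \<or>
         (\<exists>\<alpha> \<beta> m2. \<alpha> + \<beta> = n \<and> u = rp \<alpha> c \<and> m = rp \<beta> c @ m2 \<and> m2 \<noteq> [] \<and> R = m2 @ y)"
proof (cases "n \<le> length u")
  case True
  have "take n u = take n (rp n c @ R)" using assms True by simp
  then have "take n u = rp n c" by simp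
  moreover have "drop n (rp n c @ R) = drop n (u @ m @ y)" using assms by simp
  then have "R = drop n u @ m @ y" using True by simp
  moreover have "u = take n u @ drop n u" by simp
  ultimately show ?thesis by auto
next
  case False
  define \<alpha> where "\<alpha> = length u"
  have "take \<alpha> (rp n c @ R) = u" unfolding \<alpha>_def using assms by simp
  then have u: "u = rp \<alpha> c" using False unfolding \<alpha>_def by simp
  have "drop \<alpha> (rp n c @ R) = m @ y" unfolding \<alpha>_def using assms by simp
  then have my: "m @ y = rp (n - \<alpha>) c @ R" using False unfolding \<alpha>_def by simp
  show ?thesis
  proof (cases "length m \<le> n - \<alpha>")
    case True
    have "take (length m) (m @ y) = m" by simp
    then have m: "m = rp (length m) c" using my True by simp
    have "drop (length m) (m @ y) = y" by simp
    then have y: "y = rp (n - \<alpha> - length m) c @ R" using my True by simp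
    show ?thesis using u m y True False unfolding \<alpha>_def
      by (intro disjI2 disjI1 exI[of _ "length u"] exI[of _ "length m"] exI[of _ "n - length u - length m"]) auto
  next
    case False2: False
    have "take (n - \<alpha>) (m @ y) = take (n - \<alpha>) m" using False2 by simp
    then have t: "take (n - \<alpha>) m = rp (n - \<alpha>) c" using my by simp
    have "drop (n - \<alpha>) (m @ y) = drop (n - \<alpha>) m @ y" using False2 by simp
    then have d: "R = drop (n - \<alpha>) m @ y" using my by simp
    have ne: "drop (n - \<alpha>) m \<noteq> []" using False2 by simp
    have "m = take (n - \<alpha>) m @ drop (n - \<alpha>) m" by simp
    then have "m = rp (n - \<alpha>) c @ drop (n - \<alpha>) m" using t by simp
    moreover have an: "\<alpha> < n" using False unfolding \<alpha>_def by simp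
    ultimately show ?thesis using u d ne
      by (intro disjI2 disjI2 exI[of _ \<alpha>] exI[of _ "n - \<alpha>"] exI[of _ "drop (n - \<alpha>) m"]) auto
  qed
qed

lemma W2:
  assumes "rp n d @ R = m2 @ y" "length m2 \<le> n"
  shows "m2 = rp (length m2) d \<and> y = rp (n - length m2) d @ R"
proof -
  have "take (length m2) (rp n d @ R) = take (length m2) (m2 @ y)" using assms(1) by simp
  then have 1: "m2 = rp (length m2) d" using assms(2) by simp
  have "drop (length m2) (rp n d @ R) = drop (length m2) (m2 @ y)" using assms(1) by simp
  then have 2: "y = rp (n - length m2) d @ R" using assms(2) by simp
  show ?thesis using 1 2 by simp
qed

lemma comb:
  fixes q p :: nat
  assumes q: "odd q" "p < q"
    and z: "rp q False @ rp q True @ rp q False @ rp q True = u @ v @ w @ x @ y"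
    and ne: "v @ x \<noteq> []" and len: "length (v @ w @ x) \<le> p"
    and Z0: "u @ w @ y \<in> shuffles X0 X0" and Z2: "u @ v @ v @ w @ x @ x @ y \<in> shuffles X2 X2"
  shows False
proof -
  define m where "m = v @ w @ x"
  have lm: "length m \<le> p" using len unfolding m_def .
  have z1: "rp q False @ (rp q True @ rp q False @ rp q True) = u @ m @ y" using z unfolding m_def by simp
  from W1[OF z1] show False
  proof (elim disjE exE conjE)
    fix \<alpha> \<beta> \<delta> assume h: "\<alpha> + \<beta> + \<delta> = q" "u = rp \<alpha> False" "m = rp \<beta> False"
      "y = rp \<delta> False @ rp q True @ rp q False @ rp q True"
    have "v @ w @ x = rp \<beta> False @ rp 0 True" using h(3) unfolding m_def by simp
    from F3[OF this] obtain b1 g1 b2 g2 b3 g3 where f: "v = rp b1 False @ rp g1 True"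
      "w = rp b2 False @ rp g2 True" "x = rp b3 False @ rp g3 True" "b1 + b2 + b3 = \<beta>"
      "g1 + g2 + g3 = 0" "0 < g1 \<longrightarrow> b2 = 0 \<and> b3 = 0" "0 < g2 \<longrightarrow> b3 = 0" by blast
    have s1: "\<alpha> + (b1 + b2 + b3) + \<delta> = q" using h(1) f(4) by simp
    have s2: "b1 + b2 + b3 + (g1 + g2 + g3) \<le> p" using lm h(3) f(4,5) by simp
    have c3: "0 < g1 + g2 + g3 \<longrightarrow> \<delta> = 0" using f(5) by simp
    have yy: "y = rp \<delta> False @ rp (q - (g1 + g2 + g3)) True @ rp q False @ rp q True" using h(4) f(5) by simp
    show False by (rule winA[OF q s1 s2 f(6) f(7) c3 ne h(2) f(1) f(2) f(3) yy Z0 Z2])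
  next
    fix \<alpha> \<beta> m2 assume h: "\<alpha> + \<beta> = q" "u = rp \<alpha> False" "m = rp \<beta> False @ m2" "m2 \<noteq> []"
      "rp q True @ rp q False @ rp q True = m2 @ y"
    have "length m2 \<le> q" using lm q h(3) by simp
    from W2[OF h(5)[simplified append_assoc] this] have m2: "m2 = rp (length m2) True"
      "y = rp (q - length m2) True @ rp q False @ rp q True" by auto
    have "v @ w @ x = rp \<beta> False @ rp (length m2) True" using h(3) m2(1) unfolding m_def by simp
    from F3[OF this] obtain b1 g1 b2 g2 b3 g3 where f: "v = rp b1 False @ rp g1 True"
      "w = rp b2 False @ rp g2 True" "x = rp b3 False @ rp g3 True" "b1 + b2 + b3 = \<beta>"
      "g1 + g2 + g3 = length m2" "0 < g1 \<longrightarrow> b2 = 0 \<and> b3 = 0" "0 < g2 \<longrightarrow> b3 = 0" by blast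
    have s1: "\<alpha> + (b1 + b2 + b3) + 0 = q" using h(1) f(4) by simp
    have "length m = \<beta> + length m2" using h(3) by simp
    then have s2: "b1 + b2 + b3 + (g1 + g2 + g3) \<le> p" using lm f(4,5) by simp
    have c3: "0 < g1 + g2 + g3 \<longrightarrow> (0::nat) = 0" by simp
    have yy: "y = rp 0 False @ rp (q - (g1 + g2 + g3)) True @ rp q False @ rp q True" using m2(2) f(5) by simp
    show False by (rule winA[OF q s1 s2 f(6) f(7) c3 ne h(2) f(1) f(2) f(3) yy Z0 Z2])
  next
    fix u1 assume h1: "u = rp q False @ u1" "rp q True @ rp q False @ rp q True = u1 @ m @ y"
    from W1[OF h1(2)] show False
    proof (elim disjE exE conjE)
      fix \<alpha> \<beta> \<delta> assume h: "\<alpha> + \<beta> + \<delta> = q" "u1 = rp \<alpha> True" "m = rp \<beta> True"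
        "y = rp \<delta> True @ rp q False @ rp q True"
      have "v @ w @ x = rp \<beta> True @ rp 0 False" using h(3) unfolding m_def by simp
      from F3[OF this] obtain b1 g1 b2 g2 b3 g3 where f: "v = rp b1 True @ rp g1 False"
        "w = rp b2 True @ rp g2 False" "x = rp b3 True @ rp g3 False" "b1 + b2 + b3 = \<beta>"
        "g1 + g2 + g3 = 0" "0 < g1 \<longrightarrow> b2 = 0 \<and> b3 = 0" "0 < g2 \<longrightarrow> b3 = 0" by blast
      have u: "u = rp q False @ rp \<alpha> True" using h1(1) h(2) by simp
      have s1: "\<alpha> + (b1 + b2 + b3) + \<delta> = q" using h(1) f(4) by simp
      have s2: "b1 + b2 + b3 + (g1 + g2 + g3) \<le> p" using lm h(3) f(4,5) by simp
      have c3: "0 < g1 + g2 + g3 \<longrightarrow> \<delta> = 0" using f(5) by simp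
      have yy: "y = rp \<delta> True @ rp (q - (g1 + g2 + g3)) False @ rp q True" using h(4) f(5) by simp
      show False by (rule winB[OF q s1 s2 f(6) f(7) c3 ne u f(1) f(2) f(3) yy Z2])
    next
      fix \<alpha> \<beta> m2 assume h: "\<alpha> + \<beta> = q" "u1 = rp \<alpha> True" "m = rp \<beta> True @ m2" "m2 \<noteq> []"
        "rp q False @ rp q True = m2 @ y"
      have "length m2 \<le> q" using lm q h(3) by simp
      from W2[OF h(5) this] have m2: "m2 = rp (length m2) False"
        "y = rp (q - length m2) False @ rp q True" by auto
      have "v @ w @ x = rp \<beta> True @ rp (length m2) False" using h(3) m2(1) unfolding m_def by simp
      from F3[OF this] obtain b1 g1 b2 g2 b3 g3 where f: "v = rp b1 True @ rp g1 False"
        "w = rp b2 True @ rp g2 False" "x = rp b3 True @ rp g3 False" "b1 + b2 + b3 = \<beta>"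
        "g1 + g2 + g3 = length m2" "0 < g1 \<longrightarrow> b2 = 0 \<and> b3 = 0" "0 < g2 \<longrightarrow> b3 = 0" by blast
      have u: "u = rp q False @ rp \<alpha> True" using h1(1) h(2) by simp
      have s1: "\<alpha> + (b1 + b2 + b3) + 0 = q" using h(1) f(4) by simp
      have "length m = \<beta> + length m2" using h(3) by simp
      then have s2: "b1 + b2 + b3 + (g1 + g2 + g3) \<le> p" using lm f(4,5) by simp
      have c3: "0 < g1 + g2 + g3 \<longrightarrow> (0::nat) = 0" by simp
      have yy: "y = rp 0 True @ rp (q - (g1 + g2 + g3)) False @ rp q True" using m2(2) f(5) by simp
      show False by (rule winB[OF q s1 s2 f(6) f(7) c3 ne u f(1) f(2) f(3) yy Z2])
    next
      fix u2 assume h2: "u1 = rp q True @ u2" "rp q False @ rp q True = u2 @ m @ y"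
      from W1[OF h2(2)] show False
      proof (elim disjE exE conjE)
        fix \<alpha> \<beta> \<delta> assume h: "\<alpha> + \<beta> + \<delta> = q" "u2 = rp \<alpha> False" "m = rp \<beta> False"
          "y = rp \<delta> False @ rp q True"
        have "v @ w @ x = rp \<beta> False @ rp 0 True" using h(3) unfolding m_def by simp
        from F3[OF this] obtain b1 g1 b2 g2 b3 g3 where f: "v = rp b1 False @ rp g1 True"
          "w = rp b2 False @ rp g2 True" "x = rp b3 False @ rp g3 True" "b1 + b2 + b3 = \<beta>"
          "g1 + g2 + g3 = 0" "0 < g1 \<longrightarrow> b2 = 0 \<and> b3 = 0" "0 < g2 \<longrightarrow> b3 = 0" by blast
        have u: "u = rp q False @ rp q True @ rp \<alpha> False" using h1(1) h2(1) h(2) by simp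
        have s1: "\<alpha> + (b1 + b2 + b3) + \<delta> = q" using h(1) f(4) by simp
        have s2: "b1 + b2 + b3 + (g1 + g2 + g3) \<le> p" using lm h(3) f(4,5) by simp
        have c3: "0 < g1 + g2 + g3 \<longrightarrow> \<delta> = 0" using f(5) by simp
        have yy: "y = rp \<delta> False @ rp (q - (g1 + g2 + g3)) True" using h(4) f(5) by simp
        show False by (rule winC[OF q s1 s2 f(6) f(7) c3 ne u f(1) f(2) f(3) yy Z0 Z2])
      next
        fix \<alpha> \<beta> m2 assume h: "\<alpha> + \<beta> = q" "u2 = rp \<alpha> False" "m = rp \<beta> False @ m2" "m2 \<noteq> []"
          "rp q True = m2 @ y"
        have "length m2 \<le> q" using lm q h(3) by simp
        from W2[of q True "[]" m2 y] h(5) this have m2: "m2 = rp (length m2) True"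
          "y = rp (q - length m2) True" by auto
        have "v @ w @ x = rp \<beta> False @ rp (length m2) True" using h(3) m2(1) unfolding m_def by simp
        from F3[OF this] obtain b1 g1 b2 g2 b3 g3 where f: "v = rp b1 False @ rp g1 True"
          "w = rp b2 False @ rp g2 True" "x = rp b3 False @ rp g3 True" "b1 + b2 + b3 = \<beta>"
          "g1 + g2 + g3 = length m2" "0 < g1 \<longrightarrow> b2 = 0 \<and> b3 = 0" "0 < g2 \<longrightarrow> b3 = 0" by blast
        have u: "u = rp q False @ rp q True @ rp \<alpha> False" using h1(1) h2(1) h(2) by simp
        have s1: "\<alpha> + (b1 + b2 + b3) + 0 = q" using h(1) f(4) by simp
        have "length m = \<beta> + length m2" using h(3) by simp
        then have s2: "b1 + b2 + b3 + (g1 + g2 + g3) \<le> p" using lm f(4,5) by simp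
        have c3: "0 < g1 + g2 + g3 \<longrightarrow> (0::nat) = 0" by simp
        have yy: "y = rp 0 False @ rp (q - (g1 + g2 + g3)) True" using m2(2) f(5) by simp
        show False by (rule winC[OF q s1 s2 f(6) f(7) c3 ne u f(1) f(2) f(3) yy Z0 Z2])
      next
        fix u3 assume h3: "u2 = rp q False @ u3" "rp q True = u3 @ m @ y"
        have h3': "rp q True @ [] = u3 @ m @ y" using h3(2) by simp
        from W1[OF h3'] show False
        proof (elim disjE exE conjE)
          fix \<alpha> \<beta> \<delta> assume h: "\<alpha> + \<beta> + \<delta> = q" "u3 = rp \<alpha> True" "m = rp \<beta> True"
            "y = rp \<delta> True @ []"
          have "v @ w @ x = rp \<beta> True @ rp 0 False" using h(3) unfolding m_def by simp
          from F3[OF this] obtain b1 g1 b2 g2 b3 g3 where f: "v = rp b1 True @ rp g1 False"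
            "w = rp b2 True @ rp g2 False" "x = rp b3 True @ rp g3 False" "b1 + b2 + b3 = \<beta>"
            "g1 + g2 + g3 = 0" by blast
          have u: "u = rp q False @ rp q True @ rp q False @ rp \<alpha> True" using h1(1) h2(1) h3(1) h(2) by simp
          have s1: "\<alpha> + (b1 + b2 + b3) + \<delta> = q" using h(1) f(4) by simp
          have g0: "g1 = 0" "g2 = 0" "g3 = 0" using f(5) by auto
          show False by (rule winD[OF q s1 ne u _ _ _ _ Z0]) (use f g0 h(4) in simp_all)
        next
          fix u4 assume "u3 = rp q True @ u4" "[] = u4 @ m @ y"
          then have "m = []" by simp
          then show False using ne unfolding m_def by simp
        next
          fix \<alpha> \<beta> m2 assume "m2 \<noteq> []" "[] = m2 @ y"
          then show False by simp
        qed
      qed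
    qed
  qed
qed

lemma app_in_shuffles: "xs @ ys \<in> shuffles xs ys"
  by (induction xs) (auto intro: Cons_in_shuffles_leftI)

lemma foldl_const: "foldl (\<lambda>q a. (0::nat)) 0 w = 0"
  by (induction w rule: rev_induct) auto

theorem mainTheorem1:
  shows "\<not> context_free (self_shuffle (UNIV :: bool list set)) \<and>
         (\<exists>L :: bool list set. regular L \<and> \<not> context_free (self_shuffle L))"
proof -
  have nc: "\<not> context_free (self_shuffle (UNIV :: bool list set))"
  proof
    assume "context_free (self_shuffle (UNIV :: bool list set))"
    then obtain P S where P: "finite P" and L: "self_shuffle (UNIV :: bool list set) = cfg_lang P S"
      unfolding context_free_def by blast
    from pumping[OF P, of S] obtain p where pp: "\<forall>w \<in> cfg_lang P S. p < length w \<longrightarrow>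
      (\<exists>u v w' x y. w = u @ v @ w' @ x @ y \<and> v @ x \<noteq> [] \<and> length (v @ w' @ x) \<le> p \<and>
       (\<forall>i. u @ concat (replicate i v) @ w' @ concat (replicate i x) @ y \<in> cfg_lang P S))"
      by (elim exE)
    define q where "q = 2 * p + 1"
    have q: "odd q" "p < q" unfolding q_def by auto
    define z where "z = rp q False @ rp q True @ rp q False @ rp q True"
    have "z \<in> shuffles (rp q False @ rp q True) (rp q False @ rp q True)"
      unfolding z_def using app_in_shuffles[of "rp q False @ rp q True" "rp q False @ rp q True"] by simp
    then have "z \<in> self_shuffle UNIV" unfolding self_shuffle_def by (rule UN_I[rotated]) simp
    then have zL: "z \<in> cfg_lang P S" using L by simp
    have zl: "p < length z" unfolding z_def using q by simp
    have "\<exists>u v w' x y. z = u @ v @ w' @ x @ y \<and> v @ x \<noteq> [] \<and> length (v @ w' @ x) \<le> p \<and>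
       (\<forall>i. u @ concat (replicate i v) @ w' @ concat (replicate i x) @ y \<in> cfg_lang P S)"
      using bspec[OF pp zL] zl by (rule mp)
    then obtain u v w' x y where d: "z = u @ v @ w' @ x @ y" "v @ x \<noteq> []"
      "length (v @ w' @ x) \<le> p"
      "\<And>i. u @ concat (replicate i v) @ w' @ concat (replicate i x) @ y \<in> cfg_lang P S"
      by (elim exE conjE) (rule that, assumption+, blast)
    have "u @ w' @ y \<in> cfg_lang P S" using d(4)[of 0] by simp
    then have "u @ w' @ y \<in> self_shuffle UNIV" using L by simp
    then obtain X0 where Z0: "u @ w' @ y \<in> shuffles X0 X0" unfolding self_shuffle_def by (elim UN_E)
    have "u @ v @ v @ w' @ x @ x @ y \<in> cfg_lang P S" using d(4)[of "Suc (Suc 0)"] by simp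
    then have "u @ v @ v @ w' @ x @ x @ y \<in> self_shuffle UNIV" using L by simp
    then obtain X2 where Z2: "u @ v @ v @ w' @ x @ x @ y \<in> shuffles X2 X2"
      unfolding self_shuffle_def by (elim UN_E)
    show False using comb[OF q d(1)[unfolded z_def] d(2) d(3) Z0 Z2] .
  qed
  have "regular (UNIV :: bool list set)"
    unfolding regular_def
    by (rule exI[of _ "{0}"], rule exI[of _ "\<lambda>q a. 0"], rule exI[of _ 0], rule exI[of _ "{0}"])
      (simp add: foldl_const)
  then show ?thesis using nc by blast
qed


end
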